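(* In the setting of the context, take $\beta>0$ and $c>0$. Then for $\mu\in\mathbb{R}$ one has $i\mu\in\overline{W_{\overline{\mathbb{R}}\times\{\beta\}}(T)\setminus i\mathbb{R}}$ if and only if $\mu=0$ or $\mu$ is a real solution of $$q_\beta(\mu):=\mu^4+2d\mu^3+(2c+d^2)\mu^2+d\left(\frac{\beta}{2}+2c\right)\mu+c(\beta+c)=0.$$ The same statement holds also if $c=0$, with the exception that $0$ is then not in the set $\overline{W_{\overline{\mathbb{R}}\times\{\beta\}}(T)\setminus i\mathbb{R}}$.
   Context: Let $c\ge0$, $d>0$, $\delta_\pm:=\pm\sqrt{c-d^2/4}-id/2$ (principal square root). For real $\alpha,\beta$ let $p_{(\alpha,\beta)}(\omega):=(\alpha-\omega^2)(c-id\omega-\omega^2)-\beta\omega^2$ with roots $r_1,\dots,r_4$ labelled continuously in $(\alpha,\beta)\in\mathbb{R}^2$ and extended by limits to $\alpha=\pm\infty$ (where the roots are $\delta_+,\delta_-$ and $\infty$ twice), with values in the Riemann sphere $\overline{\mathbb{C}}$. For fixed $\beta$, $W_{\overline{\mathbb{R}}\times\{\beta\}}(T):=\bigcup_{n=1}^4\{r_n(\alpha,\beta):\alpha\in\mathbb{R}\cup\{\pm\infty\}\}$; the overline denotes closure in $\overline{\mathbb{C}}$. *)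

theory Defs
  imports "HOL-Analysis.Analysis"
begin

definition pT :: "real \<Rightarrow> real \<Rightarrow> real \<Rightarrow> real \<Rightarrow> complex \<Rightarrow> complex" where
  "pT c d \<alpha> \<beta> \<omega> =
     (of_real \<alpha> - \<omega>^2) * (of_real c - \<i> * of_real d * \<omega> - \<omega>^2) - of_real \<beta> * \<omega>^2"

definition delta_plus :: "real \<Rightarrow> real \<Rightarrow> complex" where
  "delta_plus c d = csqrt (of_real (c - d^2/4)) - \<i> * of_real (d/2)"

definition delta_minus :: "real \<Rightarrow> real \<Rightarrow> complex" where
  "delta_minus c d = - csqrt (of_real (c - d^2/4)) - \<i> * of_real (d/2)"

text \<open>Finite part of W over the extended real line times {beta}: all roots of p for
  real alpha (the union over the four continuously labelled root branches), together
  with the finite limit roots delta_plus, delta_minus at alpha = +-infinity.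
  The point infinity of the Riemann sphere is omitted.\<close>
definition W_fin :: "real \<Rightarrow> real \<Rightarrow> real \<Rightarrow> complex set" where
  "W_fin c d \<beta> = {\<omega>. \<exists>\<alpha>::real. pT c d \<alpha> \<beta> \<omega> = 0} \<union> {delta_plus c d, delta_minus c d}"

definition imag_axis :: "complex set" where
  "imag_axis = {z. Re z = 0}"

definition q_beta :: "real \<Rightarrow> real \<Rightarrow> real \<Rightarrow> real \<Rightarrow> real" where
  "q_beta c d \<beta> \<mu> = \<mu>^4 + 2*d*\<mu>^3 + (2*c + d^2)*\<mu>^2 + d*(\<beta>/2 + 2*c)*\<mu> + c*(\<beta> + c)"

end

theory Submission
  imports Defs
begin

lemma ivt_prod:
  fixes g :: "real \<Rightarrow> real"
  assumes "continuous_on UNIV g" "g a * g b \<le> 0" "a \<le> b"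
  shows "\<exists>y. a \<le> y \<and> y \<le> b \<and> g y = 0"
proof -
  have c: "continuous_on {a..b} g" using assms(1) by (rule continuous_on_subset) auto
  show ?thesis
  proof (cases "g a \<le> 0")
    case True
    have "0 \<le> g b \<or> g a = 0" using True assms(2) by (auto simp: mult_le_0_iff)
    then show ?thesis using IVT'[OF True _ assms(3) c] assms(3) by auto
  next
    case False
    have gb: "g b \<le> 0" using assms(2) False by (auto simp: mult_le_0_iff)
    show ?thesis using IVT2'[OF gb _ assms(3) c] False by auto
  qed
qed

lemma sign_pres:
  fixes g :: "real \<Rightarrow> real"
  assumes "isCont g a" "g a \<noteq> 0"
  shows "\<exists>\<eta>>0. \<forall>z. \<bar>z - a\<bar> < \<eta> \<longrightarrow> g z * g a > 0"
proof -
  from assms(1) have "\<forall>e>0. \<exists>d>0. \<forall>x'. dist x' a < d \<longrightarrow> dist (g x') (g a) < e"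
    by (simp add: continuous_at_eps_delta)
  then obtain d where d: "d>0" "\<forall>x'. dist x' a < d \<longrightarrow> dist (g x') (g a) < \<bar>g a\<bar>"
    using assms(2) by (meson zero_less_abs_iff)
  show ?thesis
  proof (intro exI[of _ d] conjI allI impI)
    fix z assume "\<bar>z - a\<bar> < d"
    then have "\<bar>g z - g a\<bar> < \<bar>g a\<bar>" using d by (simp add: dist_real_def)
    then show "g z * g a > 0"
    proof (cases "g a > 0")
      case True
      then have "g z > 0" using \<open>\<bar>g z - g a\<bar> < \<bar>g a\<bar>\<close> by (simp add: abs_less_iff)
      then show ?thesis using True by simp
    next
      case False
      then have "g a < 0" using assms(2) by simp
      then have "g z < 0" using \<open>\<bar>g z - g a\<bar> < \<bar>g a\<bar>\<close> by (simp add: abs_less_iff)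
      then show ?thesis using \<open>g a < 0\<close> by (simp add: mult_neg_neg)
    qed
  qed (use d in auto)
qed

lemma final_step:
  fixes F :: "real \<Rightarrow> real \<Rightarrow> real"
  assumes contY: "\<And>s. continuous_on UNIV (\<lambda>y. F s y)"
    and "0 < s" "s < e^2" "e > 0" "\<bar>ya - \<mu>\<bar> < e" "\<bar>yb - \<mu>\<bar> < e" "ya \<le> yb"
    and "F s ya * F s yb \<le> 0"
  shows "\<exists>x y. x \<noteq> 0 \<and> \<bar>x\<bar> < e \<and> \<bar>y - \<mu>\<bar> < e \<and> F (x^2) y = 0"
proof -
  obtain y where y: "ya \<le> y" "y \<le> yb" "F s y = 0"
    using ivt_prod[of "F s" ya yb] contY assms by auto
  have "sqrt s < sqrt (e^2)" using assms(3) by (rule real_sqrt_less_mono)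
  then have "sqrt s < e" using assms(4) by simp
  moreover have "sqrt s \<noteq> 0" using assms(2) by simp
  moreover have "(sqrt s)^2 = s" using assms(2) by simp
  ultimately show ?thesis using y assms(5,6)
    by (intro exI[of _ "sqrt s"] exI[of _ y]) auto
qed

lemma min3: "a>0 \<Longrightarrow> b>0 \<Longrightarrow> c>0 \<Longrightarrow> min (min a b) c / 2 > 0 \<and> min (min a b) c / 2 < a \<and> min (min a b) c / 2 < b \<and> min (min a b) c / 2 < (c::real)"
  by (auto simp: min_def)

lemma sgn1: "a*b>0 \<Longrightarrow> b*c>0 \<Longrightarrow> a*c>(0::real)"
  by (auto simp: zero_less_mult_iff)
lemma sgn2: "a*A>0 \<Longrightarrow> b*B>0 \<Longrightarrow> A*B<0 \<Longrightarrow> a*b<(0::real)"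
  by (auto simp: zero_less_mult_iff mult_less_0_iff)

lemma odd_case:
  fixes F :: "real \<Rightarrow> real \<Rightarrow> real" and R :: "real \<Rightarrow> real"
  assumes contY: "\<And>s. continuous_on UNIV (\<lambda>y. F s y)"
    and contS: "\<And>y. isCont (\<lambda>s. F s y) 0"
    and k: "odd k" and R0: "R 0 \<noteq> 0" "isCont R 0" and eq: "\<And>t. F 0 (\<mu>+t) = t^k * R t"
    and e: "e > 0"
  shows "\<exists>x y. x \<noteq> 0 \<and> \<bar>x\<bar> < e \<and> \<bar>y - \<mu>\<bar> < e \<and> F (x^2) y = 0"
proof -
  obtain \<delta> where d: "\<delta> > 0" "\<forall>z. \<bar>z - 0\<bar> < \<delta> \<longrightarrow> R z * R 0 > 0"
    using sign_pres[OF R0(2) R0(1)] by blast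
  define t where "t = min \<delta> e / 2"
  have t: "t > 0" "t < \<delta>" "t < e" using d e by (auto simp: t_def)
  have "R t * R 0 > 0" "R (-t) * R 0 > 0" using d t by auto
  then have Rt: "R t * R (-t) > 0" by (auto simp: zero_less_mult_iff)
  have F1: "F 0 (\<mu> - t) = - (t^k) * R (-t)" using eq[of "-t"] k by (simp add: power_minus_odd)
  have F2: "F 0 (\<mu> + t) = t^k * R t" using eq by simp
  have "F 0 (\<mu> - t) * F 0 (\<mu> + t) = - ((t^k)^2 * (R t * R (-t)))"
    unfolding F1 F2 by (simp add: power2_eq_square algebra_simps)
  moreover have "(t^k)^2 * (R t * R (-t)) > 0" using t Rt by simp
  ultimately have neg: "F 0 (\<mu> - t) * F 0 (\<mu> + t) < 0" by linarith
  then have nz: "F 0 (\<mu> - t) \<noteq> 0" "F 0 (\<mu> + t) \<noteq> 0" by auto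
  obtain \<eta>1 where h1: "\<eta>1 > 0" "\<forall>z. \<bar>z - 0\<bar> < \<eta>1 \<longrightarrow> F z (\<mu> - t) * F 0 (\<mu> - t) > 0"
    using sign_pres[OF contS nz(1)] by blast
  obtain \<eta>2 where h2: "\<eta>2 > 0" "\<forall>z. \<bar>z - 0\<bar> < \<eta>2 \<longrightarrow> F z (\<mu> + t) * F 0 (\<mu> + t) > 0"
    using sign_pres[OF contS nz(2)] by blast
  have e2: "e^2 > 0" using e by simp
  obtain s where s: "s > 0" "s < \<eta>1" "s < \<eta>2" "s < e^2" using min3[OF h1(1) h2(1) e2] by blast
  have pp: "F s (\<mu> - t) * F s (\<mu> + t) < 0"
    using sgn2[of "F s (\<mu> - t)" "F 0 (\<mu> - t)" "F s (\<mu> + t)" "F 0 (\<mu> + t)"] h1 h2 s neg by auto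
  show ?thesis
    by (rule final_step[where F=F and s=s and e=e and ya="\<mu> - t" and yb="\<mu> + t" and \<mu>=\<mu>])
      (use contY s e t pp in auto)
qed

lemma even_case:
  fixes F :: "real \<Rightarrow> real \<Rightarrow> real" and R B :: "real \<Rightarrow> real"
  assumes contY: "\<And>s. continuous_on UNIV (\<lambda>y. F s y)"
    and contS: "\<And>y. isCont (\<lambda>s. F s y) 0"
    and R0: "R 0 \<noteq> 0" "isCont R 0" and eq: "\<And>t. F 0 (\<mu>+t) = t^2 * R t"
    and B: "isCont B 0" "B 0 * R 0 < 0" and eqB: "\<And>s. F s \<mu> = s * B s"
    and e: "e > 0"
  shows "\<exists>x y. x \<noteq> 0 \<and> \<bar>x\<bar> < e \<and> \<bar>y - \<mu>\<bar> < e \<and> F (x^2) y = 0"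
proof -
  obtain \<delta> where d: "\<delta> > 0" "\<forall>z. \<bar>z - 0\<bar> < \<delta> \<longrightarrow> R z * R 0 > 0"
    using sign_pres[OF R0(2) R0(1)] by blast
  define t where "t = min \<delta> e / 2"
  have t: "t > 0" "t < \<delta>" "t < e" using d e by (auto simp: t_def)
  have "R t * R 0 > 0" using d t by auto
  moreover have "F 0 (\<mu> + t) * R 0 = t^2 * (R t * R 0)" by (simp only: eq mult.assoc)
  moreover have "t^2 > 0" using t by simp
  ultimately have pos: "F 0 (\<mu> + t) * R 0 > 0" by (metis mult_pos_pos)
  then have nz: "F 0 (\<mu> + t) \<noteq> 0" by auto
  have B0: "B 0 \<noteq> 0" using B by auto
  obtain \<eta>1 where h1: "\<eta>1 > 0" "\<forall>z. \<bar>z - 0\<bar> < \<eta>1 \<longrightarrow> F z (\<mu> + t) * F 0 (\<mu> + t) > 0"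
    using sign_pres[OF contS nz] by blast
  obtain \<eta>2 where h2: "\<eta>2 > 0" "\<forall>z. \<bar>z - 0\<bar> < \<eta>2 \<longrightarrow> B z * B 0 > 0"
    using sign_pres[OF B(1) B0] by blast
  have e2: "e^2 > 0" using e by simp
  obtain s where s: "s > 0" "s < \<eta>1" "s < \<eta>2" "s < e^2" using min3[OF h1(1) h2(1) e2] by blast
  have a1: "F s \<mu> * B 0 > 0" using h2 s eqB[of s] by (simp add: mult.assoc)
  have a2: "F s (\<mu> + t) * R 0 > 0" using sgn1[OF _ pos] h1 s by auto
  have pp: "F s \<mu> * F s (\<mu> + t) < 0" using sgn2[OF a1 a2 B(2)] .
  show ?thesis
    by (rule final_step[where F=F and s=s and e=e and ya="\<mu>" and yb="\<mu> + t" and \<mu>=\<mu>])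
      (use contY s e t pp in auto)
qed


definition Gs :: "real \<Rightarrow> real \<Rightarrow> real \<Rightarrow> real \<Rightarrow> real \<Rightarrow> real" where
  "Gs c d \<beta> u y = 2*y*u^2 + u*(2*y*(2*y^2+2*d*y+d^2-2*c)+\<beta>*d) + 2*y*q_beta c d \<beta> y"

definition Dz :: "real \<Rightarrow> real \<Rightarrow> complex \<Rightarrow> complex" where
  "Dz c d \<omega> = of_real c - \<i> * of_real d * \<omega> - \<omega>^2"

lemma im_key:
  "Im (cnj (Dz c d \<omega>) * (\<omega>^2 * Dz c d \<omega> + of_real \<beta> * \<omega>^2)) = Re \<omega> * Gs c d \<beta> ((Re \<omega>)^2) (Im \<omega>)"
proof -
  obtain x y where w: "\<omega> = Complex x y" by (cases \<omega>)
  show ?thesis unfolding w Dz_def Gs_def q_beta_def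
    by (simp add: power2_eq_square power3_eq_cube power4_eq_xxxx algebra_simps)
qed

lemma pT_alt: "pT c d \<alpha> \<beta> \<omega> = of_real \<alpha> * Dz c d \<omega> - (\<omega>^2 * Dz c d \<omega> + of_real \<beta> * \<omega>^2)"
  unfolding pT_def Dz_def by (simp add: algebra_simps)

lemma root_G:
  assumes "pT c d \<alpha> \<beta> \<omega> = 0"
  shows "Re \<omega> * Gs c d \<beta> ((Re \<omega>)^2) (Im \<omega>) = 0"
proof -
  let ?D = "Dz c d \<omega>" and ?S = "\<omega>^2 * Dz c d \<omega> + of_real \<beta> * \<omega>^2"
  have "?S = of_real \<alpha> * ?D" using assms unfolding pT_alt by simp
  then have "cnj ?D * ?S = of_real \<alpha> * (?D * cnj ?D)" by (simp add: algebra_simps)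
  also have "\<dots> = of_real (\<alpha> * ((Re ?D)^2 + (Im ?D)^2))" by (simp add: complex_mult_cnj)
  finally have "Im (cnj ?D * ?S) = 0" by simp
  then show ?thesis using im_key by metis
qed

lemma D_zero:
  assumes "Dz c d \<omega> = 0"
  shows "\<omega> = delta_plus c d \<or> \<omega> = delta_minus c d"
proof -
  let ?S = "csqrt (of_real (c - d^2/4))"
  have S2: "?S^2 = of_real (c - d^2/4)" by (rule power2_csqrt)
  have "(\<omega> - delta_plus c d) * (\<omega> - delta_minus c d) = (\<omega> + \<i> * of_real (d/2))^2 - ?S^2"
    unfolding delta_plus_def delta_minus_def by (simp add: algebra_simps power2_eq_square)
  also have "\<dots> = - Dz c d \<omega>" unfolding S2 Dz_def
    by (simp add: algebra_simps power2_eq_square of_real_diff of_real_divide)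
  finally show ?thesis using assms by simp
qed

lemma W_from:
  assumes "Re \<omega> \<noteq> 0" "Gs c d \<beta> ((Re \<omega>)^2) (Im \<omega>) = 0"
  shows "\<omega> \<in> W_fin c d \<beta>"
proof (cases "Dz c d \<omega> = 0")
  case True
  then show ?thesis using D_zero unfolding W_fin_def by blast
next
  case False
  let ?D = "Dz c d \<omega>" and ?S = "\<omega>^2 * Dz c d \<omega> + of_real \<beta> * \<omega>^2"
  have I: "Im (cnj ?D * ?S) = 0" using im_key assms(2) by simp
  have "Im (?S / ?D) = 0" using I by (simp add: Im_divide algebra_simps)
  then have "?S / ?D = of_real (Re (?S / ?D))" by (simp add: complex_eq_iff)
  then have "?S = of_real (Re (?S / ?D)) * ?D" using False by (metis nonzero_divide_eq_eq)
  then have "pT c d (Re (?S / ?D)) \<beta> \<omega> = 0" unfolding pT_alt by simp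
  then show ?thesis unfolding W_fin_def by blast
qed

definition rr :: "real \<Rightarrow> real \<Rightarrow> real \<Rightarrow> real" where
  "rr d \<beta> y = y^3 + 2*d*y^2 + d^2*y + d*\<beta>/2"

lemma Gs0: "Gs c d \<beta> 0 y = 2*y*q_beta c d \<beta> y" by (simp add: Gs_def)
lemma Gs_c0: "Gs 0 d \<beta> u y = 2*(u+y^2)*(y*u + rr d \<beta> y)"
  unfolding Gs_def q_beta_def rr_def by (simp add: algebra_simps power2_eq_square power3_eq_cube power4_eq_xxxx)
lemma q_c0: "q_beta 0 d \<beta> y = y * rr d \<beta> y"
  unfolding q_beta_def rr_def by (simp add: algebra_simps power2_eq_square power3_eq_cube power4_eq_xxxx)
lemma q_shift: "q_beta c d \<beta> (\<mu>+t) = q_beta c d \<beta> \<mu>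
   + (4*\<mu>^3+6*d*\<mu>^2+2*(2*c+d^2)*\<mu> + d*(\<beta>/2+2*c))*t + (6*\<mu>^2+6*d*\<mu>+2*c+d^2)*t^2 + (4*\<mu>+2*d)*t^3 + t^4"
  unfolding q_beta_def by (simp add: algebra_simps power2_eq_square power3_eq_cube power4_eq_xxxx)
lemma rr_shift: "rr d \<beta> (\<mu>+t) = rr d \<beta> \<mu> + (3*\<mu>^2+4*d*\<mu>+d^2)*t + (3*\<mu>+2*d)*t^2 + t^3"
  unfolding rr_def by (simp add: algebra_simps power2_eq_square power3_eq_cube)
lemma Gs_mu: "Gs c d \<beta> u \<mu> = u*(2*\<mu>*u + (2*\<mu>*(2*\<mu>^2+2*d*\<mu>+d^2-2*c)+\<beta>*d)) + 2*\<mu>*q_beta c d \<beta> \<mu>"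
  unfolding Gs_def by (simp add: algebra_simps power2_eq_square)

lemma contY_Gs: "continuous_on UNIV (\<lambda>y. Gs c d \<beta> u y)"
  unfolding Gs_def q_beta_def by (intro continuous_intros)
lemma contS_Gs: "isCont (\<lambda>u. Gs c d \<beta> u y) 0"
  unfolding Gs_def q_beta_def by (intro continuous_intros)
lemma contY_r: "continuous_on UNIV (\<lambda>y. y*u + rr d \<beta> y)"
  unfolding rr_def by (intro continuous_intros)
lemma contS_r: "isCont (\<lambda>u. y*u + rr d \<beta> y) 0"
  unfolding rr_def by (intro continuous_intros)

lemma double_root_b:
  fixes c d \<beta> \<mu> :: real
  assumes "d > 0" "\<beta> > 0" "q_beta c d \<beta> \<mu> = 0"
    and q1: "4*\<mu>^3+6*d*\<mu>^2+2*(2*c+d^2)*\<mu> + d*(\<beta>/2+2*c) = 0"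
  shows "3*(2*\<mu>*(2*\<mu>^2+2*d*\<mu>+d^2-2*c)+\<beta>*d) = -2*\<mu>*(6*\<mu>^2+6*d*\<mu>+2*c+d^2)"
proof -
  define E where "E = \<mu>^2 + d*\<mu> + c"
  have "4*\<mu>^3+6*d*\<mu>^2+2*(2*c+d^2)*\<mu> + d*(\<beta>/2+2*c) = 2*E*(2*\<mu>+d) + \<beta>*d/2"
    unfolding E_def by (simp add: algebra_simps power2_eq_square power3_eq_cube)
  then have bd: "\<beta>*d = -4*E*(2*\<mu>+d)" using q1 by simp
  have "d * q_beta c d \<beta> \<mu> = d*E^2 + (\<beta>*d)*(c + d*\<mu>/2)"
    unfolding E_def q_beta_def by (simp add: algebra_simps power2_eq_square power3_eq_cube power4_eq_xxxx)
  also have "\<dots> = E * (d*E - 2*(2*\<mu>+d)*(2*c+d*\<mu>))" unfolding bd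
    by (simp add: algebra_simps power2_eq_square)
  finally have "E * (d*E - 2*(2*\<mu>+d)*(2*c+d*\<mu>)) = 0" using assms(3) by simp
  moreover have "E \<noteq> 0" using bd assms(1,2) by auto
  ultimately have h: "d*E - 2*(2*\<mu>+d)*(2*c+d*\<mu>) = 0" by simp
  have "3*(2*\<mu>*(2*\<mu>^2+2*d*\<mu>+d^2-2*c)+\<beta>*d) + 2*\<mu>*(6*\<mu>^2+6*d*\<mu>+2*c+d^2)
      = 4*(d*E - 2*(2*\<mu>+d)*(2*c+d*\<mu>))" unfolding bd E_def
    by (simp add: algebra_simps power2_eq_square power3_eq_cube)
  then show ?thesis using h by simp
qed

lemma key_cpos:
  fixes c d \<beta> \<mu> :: real
  assumes "c > 0" "d > 0" "\<beta> > 0" "\<mu> = 0 \<or> q_beta c d \<beta> \<mu> = 0" "e > 0"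
  shows "\<exists>x y. x \<noteq> 0 \<and> \<bar>x\<bar> < e \<and> \<bar>y - \<mu>\<bar> < e \<and> Gs c d \<beta> (x^2) y = 0"
proof (cases "\<mu> = 0")
  case True
  have "q_beta c d \<beta> 0 > 0" using assms by (simp add: q_beta_def)
  then show ?thesis unfolding True
    by (intro odd_case[where R="\<lambda>t. 2 * q_beta c d \<beta> t" and k=1] contY_Gs contS_Gs assms(5))
       (auto simp: Gs0 q_beta_def intro!: continuous_intros)
next
  case False
  then have q0: "q_beta c d \<beta> \<mu> = 0" using assms by simp
  define q1 where "q1 = 4*\<mu>^3+6*d*\<mu>^2+2*(2*c+d^2)*\<mu> + d*(\<beta>/2+2*c)"
  define q2 where "q2 = 6*\<mu>^2+6*d*\<mu>+2*c+d^2"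
  define q3 where "q3 = 4*\<mu>+2*d"
  have sh: "\<And>t. Gs c d \<beta> 0 (\<mu>+t) = 2*(\<mu>+t)*(q1*t + q2*t^2 + q3*t^3 + t^4)"
    unfolding Gs0 q_shift q0 q1_def q2_def q3_def by simp
  show ?thesis
  proof (cases "q1 = 0")
    case False
    have "\<And>t. Gs c d \<beta> 0 (\<mu>+t) = t^1 * (2*(\<mu>+t)*(q1 + q2*t + q3*t^2 + t^3))"
      unfolding sh by (simp add: algebra_simps power2_eq_square power3_eq_cube power4_eq_xxxx)
    then show ?thesis
      by (intro odd_case[where R="\<lambda>t. 2*(\<mu>+t)*(q1 + q2*t + q3*t^2 + t^3)" and k=1] contY_Gs contS_Gs assms(5))
         (use False \<open>\<mu> \<noteq> 0\<close> in \<open>auto intro!: continuous_intros\<close>)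
  next
    case q1z: True
    show ?thesis
    proof (cases "q2 = 0")
      case False
      define bb where "bb = 2*\<mu>*(2*\<mu>^2+2*d*\<mu>+d^2-2*c)+\<beta>*d"
      have bbv: "3*bb = -2*\<mu>*q2"
        using double_root_b[OF assms(2,3) q0] q1z unfolding bb_def q1_def q2_def by simp
      have "bb = -2*\<mu>*q2/3" using bbv by simp
      then have "bb * (2*(\<mu>+0)*(q2 + q3*0 + 0^2)) = - (4/3) * (\<mu>*q2)^2"
        by (simp add: power2_eq_square algebra_simps)
      moreover have "(\<mu>*q2)^2 > 0" using False \<open>\<mu> \<noteq> 0\<close> by simp
      ultimately have neg: "(\<lambda>u. 2*\<mu>*u + bb) 0 * (\<lambda>t. 2*(\<mu>+t)*(q2 + q3*t + t^2)) 0 < 0" by simp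
      have e1: "\<And>t. Gs c d \<beta> 0 (\<mu>+t) = t^2 * (2*(\<mu>+t)*(q2 + q3*t + t^2))"
        unfolding sh q1z by (simp add: algebra_simps power2_eq_square power3_eq_cube power4_eq_xxxx)
      have e2: "\<And>u. Gs c d \<beta> u \<mu> = u * (2*\<mu>*u + bb)"
        unfolding Gs_mu q0 bb_def by simp
      show ?thesis
        by (rule even_case[where R="\<lambda>t. 2*(\<mu>+t)*(q2 + q3*t + t^2)" and B="\<lambda>u. 2*\<mu>*u + bb",
              OF contY_Gs contS_Gs _ _ e1 _ neg e2 assms(5)])
           (use False \<open>\<mu> \<noteq> 0\<close> in \<open>auto intro!: continuous_intros\<close>)
    next
      case q2z: True
      have "q3 \<noteq> 0"
      proof
        assume "q3 = 0"
        then have "\<mu> = -d/2" unfolding q3_def by simp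
        then have "q1 = d*\<beta>/2" unfolding q1_def by (simp add: algebra_simps power2_eq_square power3_eq_cube)
        then show False using q1z assms by simp
      qed
      have "\<And>t. Gs c d \<beta> 0 (\<mu>+t) = t^3 * (2*(\<mu>+t)*(q3 + t))"
        unfolding sh q1z q2z by (simp add: algebra_simps power2_eq_square power3_eq_cube power4_eq_xxxx)
      then show ?thesis
        by (intro odd_case[where R="\<lambda>t. 2*(\<mu>+t)*(q3 + t)" and k=3] contY_Gs contS_Gs assms(5))
           (use \<open>q3 \<noteq> 0\<close> \<open>\<mu> \<noteq> 0\<close> in \<open>auto intro!: continuous_intros\<close>)
    qed
  qed
qed

lemma key_c0:
  fixes d \<beta> \<mu> :: real
  assumes "d > 0" "\<beta> > 0" "rr d \<beta> \<mu> = 0" "e > 0"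
  shows "\<exists>x y. x \<noteq> 0 \<and> \<bar>x\<bar> < e \<and> \<bar>y - \<mu>\<bar> < e \<and> y*x^2 + rr d \<beta> y = 0"
proof -
  define r1 where "r1 = 3*\<mu>^2+4*d*\<mu>+d^2"
  define r2 where "r2 = 3*\<mu>+2*d"
  have sh: "\<And>t. \<mu>*0 + rr d \<beta> (\<mu>+t) = r1*t + r2*t^2 + t^3"
    unfolding rr_shift assms(3) r1_def r2_def by simp
  have sh': "\<And>t. (\<mu>+t)*0 + rr d \<beta> (\<mu>+t) = r1*t + r2*t^2 + t^3"
    using sh by simp
  have mu_ne: "\<mu> \<noteq> 0" using assms by (auto simp: rr_def)
  show ?thesis
  proof (cases "r1 = 0")
    case False
    have "\<And>t. (\<mu>+t)*0 + rr d \<beta> (\<mu>+t) = t^1 * (r1 + r2*t + t^2)"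
      unfolding sh' by (simp add: algebra_simps power2_eq_square power3_eq_cube)
    then show ?thesis
      by (intro odd_case[where F="\<lambda>u y. y*u + rr d \<beta> y" and R="\<lambda>t. r1 + r2*t + t^2" and k=1]
            contY_r contS_r assms(4))
         (use False in \<open>auto intro!: continuous_intros\<close>)
  next
    case r1z: True
    have fac: "(3*\<mu>+d)*(\<mu>+d) = 0" using r1z unfolding r1_def by (simp add: algebra_simps power2_eq_square)
    have "\<mu> \<noteq> -d"
    proof
      assume "\<mu> = -d"
      then have "rr d \<beta> \<mu> = d*\<beta>/2" by (simp add: rr_def power2_eq_square power3_eq_cube)
      then show False using assms by simp
    qed
    then have mu: "\<mu> = -d/3" using fac by auto
    then have r2v: "r2 = d" unfolding r2_def by simp
    have neg: "(\<lambda>u. \<mu>) 0 * (\<lambda>t. r2 + t) 0 < 0" using mu r2v assms(1) by (simp add: mult_neg_pos)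
    have e1: "\<And>t. (\<mu>+t)*0 + rr d \<beta> (\<mu>+t) = t^2 * (r2 + t)"
      unfolding sh' r1z by (simp add: algebra_simps power2_eq_square power3_eq_cube)
    have e2: "\<And>u. \<mu>*u + rr d \<beta> \<mu> = u * \<mu>" using assms(3) by simp
    show ?thesis
      by (rule even_case[where F="\<lambda>u y. y*u + rr d \<beta> y" and R="\<lambda>t. r2 + t" and B="\<lambda>u. \<mu>",
              OF contY_r contS_r _ _ e1 _ neg e2 assms(4)])
         (use r2v assms(1) in \<open>auto intro!: continuous_intros\<close>)
  qed
qed

lemma sub1: "W_fin c d \<beta> - imag_axis \<subseteq> {\<omega>. Gs c d \<beta> ((Re \<omega>)^2) (Im \<omega>) = 0} \<union> ({delta_plus c d, delta_minus c d} - imag_axis)"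
proof
  fix \<omega> assume a: "\<omega> \<in> W_fin c d \<beta> - imag_axis"
  then have re: "Re \<omega> \<noteq> 0" by (simp add: imag_axis_def)
  from a have "(\<exists>\<alpha>. pT c d \<alpha> \<beta> \<omega> = 0) \<or> \<omega> \<in> {delta_plus c d, delta_minus c d}"
    unfolding W_fin_def by blast
  then show "\<omega> \<in> {\<omega>. Gs c d \<beta> ((Re \<omega>)^2) (Im \<omega>) = 0} \<union> ({delta_plus c d, delta_minus c d} - imag_axis)"
  proof
    assume "\<exists>\<alpha>. pT c d \<alpha> \<beta> \<omega> = 0"
    then obtain \<alpha> where "pT c d \<alpha> \<beta> \<omega> = 0" by blast
    from root_G[OF this] re show ?thesis by simp
  next
    assume "\<omega> \<in> {delta_plus c d, delta_minus c d}"
    then show ?thesis using a by blast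
  qed
qed

lemma closedG: "closed {\<omega>. Gs c d \<beta> ((Re \<omega>)^2) (Im \<omega>) = 0}"
  by (rule closed_Collect_eq[OF _ continuous_on_const]) (unfold Gs_def q_beta_def, intro continuous_intros)

lemma closedR: "closed {\<omega>. Im \<omega> * (Re \<omega>)^2 + rr d \<beta> (Im \<omega>) = 0}"
  by (rule closed_Collect_eq[OF _ continuous_on_const]) (unfold rr_def, intro continuous_intros)

lemma approach:
  fixes F :: "real \<Rightarrow> real \<Rightarrow> real"
  assumes mem: "\<And>x y. x \<noteq> 0 \<Longrightarrow> F (x^2) y = 0 \<Longrightarrow> Complex x y \<in> S"
    and ex: "\<forall>e>0. \<exists>x y. x \<noteq> 0 \<and> \<bar>x\<bar> < e \<and> \<bar>y - \<mu>\<bar> < e \<and> F (x^2) y = 0"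
  shows "\<i> * of_real \<mu> \<in> closure S"
  unfolding closure_approachable
proof (intro allI impI)
  fix e :: real assume e: "e > 0"
  then obtain x y where xy: "x \<noteq> 0" "\<bar>x\<bar> < e/2" "\<bar>y - \<mu>\<bar> < e/2" "F (x^2) y = 0"
    using ex by (meson half_gt_zero)
  have "Complex x y - \<i> * of_real \<mu> = Complex x (y - \<mu>)" by (simp add: complex_eq_iff)
  then have "dist (Complex x y) (\<i> * of_real \<mu>) = cmod (Complex x (y - \<mu>))" by (simp add: dist_norm)
  also have "\<dots> \<le> \<bar>x\<bar> + \<bar>y - \<mu>\<bar>" using cmod_le[of "Complex x (y - \<mu>)"] by simp
  also have "\<dots> < e" using xy by simp
  finally show "\<exists>\<omega>\<in>S. dist \<omega> (\<i> * of_real \<mu>) < e" using mem[OF xy(1) xy(4)] by blast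
qed

lemma delta_axis0: "Re (delta_plus 0 d) = 0" "Re (delta_minus 0 d) = 0" if "d > 0"
  using that by (auto simp: delta_plus_def delta_minus_def csqrt_of_real')

theorem proposition3p2:
  fixes c d \<beta> :: real
  assumes "c \<ge> 0" and "d > 0" and "\<beta> > 0"
  shows "(c > 0 \<longrightarrow> (\<forall>\<mu>::real.
            \<i> * of_real \<mu> \<in> closure (W_fin c d \<beta> - imag_axis)
            \<longleftrightarrow> (\<mu> = 0 \<or> q_beta c d \<beta> \<mu> = 0)))
       \<and> (c = 0 \<longrightarrow> (\<forall>\<mu>::real.
            \<i> * of_real \<mu> \<in> closure (W_fin c d \<beta> - imag_axis)
            \<longleftrightarrow> (\<mu> \<noteq> 0 \<and> q_beta c d \<beta> \<mu> = 0)))"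
proof (intro conjI impI allI)
  fix \<mu> :: real assume c: "c > 0"
  show "\<i> * of_real \<mu> \<in> closure (W_fin c d \<beta> - imag_axis) \<longleftrightarrow> (\<mu> = 0 \<or> q_beta c d \<beta> \<mu> = 0)"
  proof
    assume m: "\<i> * of_real \<mu> \<in> closure (W_fin c d \<beta> - imag_axis)"
    let ?A = "{\<omega>. Gs c d \<beta> ((Re \<omega>)^2) (Im \<omega>) = 0}"
    let ?B = "{delta_plus c d, delta_minus c d} - imag_axis"
    have "closure (W_fin c d \<beta> - imag_axis) \<subseteq> closure (?A \<union> ?B)" by (rule closure_mono[OF sub1])
    also have "\<dots> = ?A \<union> ?B" by (simp add: closure_Un closure_closed[OF closedG] finite_imp_closed)
    finally have "\<i> * of_real \<mu> \<in> ?A \<union> ?B" using m by blast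
    then have "Gs c d \<beta> 0 \<mu> = 0" by (auto simp: imag_axis_def)
    then show "\<mu> = 0 \<or> q_beta c d \<beta> \<mu> = 0" by (simp add: Gs0)
  next
    assume h: "\<mu> = 0 \<or> q_beta c d \<beta> \<mu> = 0"
    show "\<i> * of_real \<mu> \<in> closure (W_fin c d \<beta> - imag_axis)"
    proof (rule approach[where F="Gs c d \<beta>"])
      fix x y :: real assume "x \<noteq> 0" "Gs c d \<beta> (x^2) y = 0"
      then show "Complex x y \<in> W_fin c d \<beta> - imag_axis"
        using W_from[of "Complex x y" c d \<beta>] by (simp add: imag_axis_def)
    next
      show "\<forall>e>0. \<exists>x y. x \<noteq> 0 \<and> \<bar>x\<bar> < e \<and> \<bar>y - \<mu>\<bar> < e \<and> Gs c d \<beta> (x^2) y = 0"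
        using key_cpos[OF c assms(2,3) h] by blast
    qed
  qed
next
  fix \<mu> :: real assume c: "c = 0"
  let ?A = "{\<omega>. Im \<omega> * (Re \<omega>)^2 + rr d \<beta> (Im \<omega>) = 0}"
  have sub: "W_fin c d \<beta> - imag_axis \<subseteq> ?A"
  proof
    fix \<omega> assume a: "\<omega> \<in> W_fin c d \<beta> - imag_axis"
    then have re: "Re \<omega> \<noteq> 0" by (simp add: imag_axis_def)
    have "\<omega> \<notin> {delta_plus c d, delta_minus c d} - imag_axis"
      using delta_axis0[OF assms(2)] c by (auto simp: imag_axis_def)
    then have "Gs c d \<beta> ((Re \<omega>)^2) (Im \<omega>) = 0" using sub1[of c d \<beta>] a by blast
    then have "2*((Re \<omega>)^2 + (Im \<omega>)^2) * (Im \<omega> * (Re \<omega>)^2 + rr d \<beta> (Im \<omega>)) = 0"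
      unfolding c Gs_c0 .
    moreover have "(Re \<omega>)^2 + (Im \<omega>)^2 > 0" using re by (simp add: add_pos_nonneg)
    ultimately show "\<omega> \<in> ?A" by simp
  qed
  show "\<i> * of_real \<mu> \<in> closure (W_fin c d \<beta> - imag_axis) \<longleftrightarrow> (\<mu> \<noteq> 0 \<and> q_beta c d \<beta> \<mu> = 0)"
  proof
    assume m: "\<i> * of_real \<mu> \<in> closure (W_fin c d \<beta> - imag_axis)"
    have "closure (W_fin c d \<beta> - imag_axis) \<subseteq> ?A"
      using closure_mono[OF sub] closure_closed[OF closedR] by blast
    then have r0: "rr d \<beta> \<mu> = 0" using m by auto
    then have "\<mu> \<noteq> 0" using assms by (auto simp: rr_def)
    then show "\<mu> \<noteq> 0 \<and> q_beta c d \<beta> \<mu> = 0" using r0 c by (simp add: q_c0)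
  next
    assume h: "\<mu> \<noteq> 0 \<and> q_beta c d \<beta> \<mu> = 0"
    then have r0: "rr d \<beta> \<mu> = 0" using c by (auto simp: q_c0)
    show "\<i> * of_real \<mu> \<in> closure (W_fin c d \<beta> - imag_axis)"
    proof (rule approach[where F="\<lambda>u y. y*u + rr d \<beta> y"])
      fix x y :: real assume x: "x \<noteq> 0" "y*x^2 + rr d \<beta> y = 0"
      then have "Gs c d \<beta> (x^2) y = 0" unfolding c Gs_c0 by simp
      then show "Complex x y \<in> W_fin c d \<beta> - imag_axis"
        using W_from[of "Complex x y" c d \<beta>] x by (simp add: imag_axis_def)
    next
      show "\<forall>e>0. \<exists>x y. x \<noteq> 0 \<and> \<bar>x\<bar> < e \<and> \<bar>y - \<mu>\<bar> < e \<and> y*x^2 + rr d \<beta> y = 0"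
        using key_c0[OF assms(2,3) r0] by blast
    qed
  qed
qed

end
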